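(* Let $\mathcal T,\Omega>0$ and $N_1,N_2\in\mathbb N$, and set $L_1:=2N_1+1$, $L_2:=2N_2+1$. Let $$w(x)=\sum_{k=-N_1}^{N_1}w_k\,\mathrm e^{2\pi i\frac{\Omega kx}{L_1}},\qquad x\in\mathbb R,$$ with $w_k\in\mathbb C$, be an $\frac{L_1}{\Omega}$-periodic trigonometric polynomial. Then for all $\tau,\nu\in\mathbb R$ and all $x_j=\frac{\mathcal T j}{L_2}$, $j=-N_2,\dots,N_2$, $$\mathrm e^{2\pi i\nu x_j}\,w(x_j-\tau)=\sum_{u=-N_1}^{N_1}\sum_{v=-N_2}^{N_2}\mathrm e^{2\pi i\frac{x_jv}{\mathcal T}}\,w\Big(x_j-\frac{u}{\Omega}\Big)\,a(\tau,\nu)_{(u,v)},$$ where $$a(\tau,\nu)_{(u,v)}:=\frac{1}{L_1L_2}\,D_{N_1}\Big(\frac{u-\Omega\tau}{L_1}\Big)\,D_{N_2}\Big(\frac{v-\mathcal T\nu}{L_2}\Big),\qquad u=-N_1,\dots,N_1,\ v=-N_2,\dots,N_2.$$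
   Context: For $N\in\mathbb N$, $D_N(x)=\sum_{k=-N}^{N}\mathrm e^{2\pi ikx}$ is the $N$th Dirichlet kernel. The left-hand side is $(M_\nu T_\tau w)(x_j)$, where $T_\tau f(x)=f(x-\tau)$ and $M_\nu f(x)=f(x)\mathrm e^{2\pi i\nu x}$. *)

theory Defs
  imports "HOL-Analysis.Analysis"
begin

definition dirichlet_kernel :: "nat \<Rightarrow> real \<Rightarrow> complex" where
  "dirichlet_kernel N x = (\<Sum>k\<in>{-int N..int N}. cis (2 * pi * of_int k * x))"

definition trig_poly :: "real \<Rightarrow> nat \<Rightarrow> (int \<Rightarrow> complex) \<Rightarrow> real \<Rightarrow> complex" where
  "trig_poly \<Omega> N1 c x =
     (\<Sum>k\<in>{-int N1..int N1}. c k * cis (2 * pi * \<Omega> * of_int k * x / real (2 * N1 + 1)))"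

definition spread_coeff ::
  "real \<Rightarrow> real \<Rightarrow> nat \<Rightarrow> nat \<Rightarrow> real \<Rightarrow> real \<Rightarrow> int \<Rightarrow> int \<Rightarrow> complex" where
  "spread_coeff T \<Omega> N1 N2 \<tau> \<nu> u v =
     (1 / (of_nat (2 * N1 + 1) * of_nat (2 * N2 + 1))) *
     dirichlet_kernel N1 ((of_int u - \<Omega> * \<tau>) / real (2 * N1 + 1)) *
     dirichlet_kernel N2 ((of_int v - T * \<nu>) / real (2 * N2 + 1))"

end

theory Submission imports Defs begin
lemma orth:
  fixes N :: nat and d :: int assumes "\<bar>d\<bar> < int (2*N+1)"
  shows "(\<Sum>u\<in>{-int N..int N}. cis (2*pi* of_int d* of_int u / real(2*N+1))) =
         (if d = 0 then of_nat (2*N+1) else 0)"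
proof (cases "d = 0")
  case True thus ?thesis by simp
next
  case False
  define L where "L = real (2*N+1)"
  have Lpos: "L > 0" unfolding L_def by simp
  define z where "z = cis (2*pi* of_int d / L)"
  have z1: "z \<noteq> 1"
  proof
    assume "z = 1"
    hence "cos (2*pi* of_int d / L) = 1" unfolding z_def by (metis cis.sel(1) one_complex.sel(1))
    then obtain n :: int where n: "2*pi* of_int d / L = of_int n * 2 * pi" using cos_one_2pi_int by blast
    hence "of_int d = of_int n * L" using Lpos by (simp add: field_simps)
    hence dn: "d = n * int (2*N+1)" unfolding L_def by (metis of_int_eq_iff of_int_mult of_int_of_nat_eq)
    with False have "n \<noteq> 0" by auto
    hence "\<bar>d\<bar> \<ge> int (2*N+1)" using dn by (simp add: abs_mult)
    with assms show False by simp
  qed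
  have zL: "z ^ (2*N+1) = 1"
  proof -
    have "z ^ (2*N+1) = cis (real (2*N+1) * (2*pi * of_int d / L))" unfolding z_def by (rule Complex.DeMoivre)
    also have "real (2*N+1) * (2*pi * of_int d / L) = 2*pi * of_int d" using Lpos by (simp add: L_def)
    finally show ?thesis by (simp add: cis_multiple_2pi)
  qed
  have "(\<Sum>u\<in>{-int N..int N}. cis (2*pi* of_int d* of_int u / L)) =
        (\<Sum>n\<in>{..<2*N+1}. cis (2*pi* of_int d* of_int (int n - int N) / L))"
    by (rule sum.reindex_bij_witness[of _ "\<lambda>n. int n - int N" "\<lambda>u. nat (u + int N)"]) auto
  also have "\<dots> = (\<Sum>n\<in>{..<2*N+1}. cis (-(2*pi* of_int d* of_int N / L)) * z ^ n)"
  proof (rule sum.cong[OF refl])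
    fix n assume "n \<in> {..<2*N+1}"
    show "cis (2*pi* of_int d* of_int (int n - int N) / L) = cis (-(2*pi* of_int d* of_int N / L)) * z ^ n"
      unfolding z_def Complex.DeMoivre cis_mult by (rule arg_cong[where f=cis]) (use Lpos in \<open>simp add: field_simps\<close>)
  qed
  also have "\<dots> = cis (-(2*pi* of_int d* of_int N / L)) * (\<Sum>n<2*N+1. z ^ n)"
    by (rule sum_distrib_left[symmetric])
  also have "(\<Sum>n<2*N+1. z ^ n) = 0" using z1 zL by (simp only: sum_gp_strict if_False) simp
  finally show ?thesis using False by (simp add: L_def)
qed

lemma collapse:
  fixes N :: nat and f :: "int \<Rightarrow> complex" and k :: int
  assumes k: "k \<in> {-int N..int N}"
  shows "(\<Sum>u\<in>{-int N..int N}. \<Sum>m\<in>{-int N..int N}.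
            f m * cis (2*pi * of_int (m - k) * of_int u / real(2*N+1))) = of_nat (2*N+1) * f k"
proof -
  have "(\<Sum>u\<in>{-int N..int N}. \<Sum>m\<in>{-int N..int N}.
            f m * cis (2*pi * of_int (m - k) * of_int u / real(2*N+1))) =
        (\<Sum>m\<in>{-int N..int N}. f m * (\<Sum>u\<in>{-int N..int N}.
            cis (2*pi * of_int (m - k) * of_int u / real(2*N+1))))"
    by (subst sum.swap) (simp add: sum_distrib_left)
  also have "\<dots> = (\<Sum>m\<in>{-int N..int N}. f m * (if m - k = 0 then of_nat (2*N+1) else 0))"
  proof (rule sum.cong[OF refl])
    fix m assume "m \<in> {-int N..int N}"
    hence "\<bar>m - k\<bar> < int (2*N+1)" using k by auto
    thus "f m * (\<Sum>u\<in>{-int N..int N}. cis (2*pi * of_int (m - k) * of_int u / real(2*N+1))) =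
          f m * (if m - k = 0 then of_nat (2*N+1) else 0)" by (simp only: orth)
  qed
  also have "\<dots> = (\<Sum>m\<in>{-int N..int N}. if m = k then f k * of_nat (2*N+1) else 0)"
    by (rule sum.cong) auto
  also have "\<dots> = of_nat (2*N+1) * f k" using k by (simp add: sum.delta mult.commute)
  finally show ?thesis .
qed

lemma claimB:
  fixes T \<nu> :: real and N2 :: nat and j :: int
  assumes "T > 0" and "- int N2 \<le> j" and "j \<le> int N2"
  defines "x \<equiv> T * of_int j / real (2 * N2 + 1)"
  shows "(\<Sum>v\<in>{-int N2..int N2}. cis (2 * pi * x * of_int v / T) *
            dirichlet_kernel N2 ((of_int v - T * \<nu>) / real (2 * N2 + 1)))
         = of_nat (2*N2+1) * cis (2 * pi * \<nu> * x)"
proof -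
  define L where "L = real (2*N2+1)"
  have Lpos: "L > 0" unfolding L_def by simp
  have "(\<Sum>v\<in>{-int N2..int N2}. cis (2 * pi * x * of_int v / T) *
            dirichlet_kernel N2 ((of_int v - T * \<nu>) / real (2 * N2 + 1)))
      = (\<Sum>v\<in>{-int N2..int N2}. \<Sum>m\<in>{-int N2..int N2}.
            cis (- (2*pi * of_int m * T * \<nu> / L)) * cis (2*pi * of_int (m - (-j)) * of_int v / real(2*N2+1)))"
    unfolding dirichlet_kernel_def sum_distrib_left
  proof (intro sum.cong refl)
    fix v m
    show "cis (2 * pi * x * of_int v / T) * cis (2 * pi * of_int m * ((of_int v - T * \<nu>) / real (2 * N2 + 1))) =
       cis (- (2*pi * of_int m * T * \<nu> / L)) * cis (2*pi * of_int (m - (-j)) * of_int v / real(2*N2+1))"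
      unfolding cis_mult x_def L_def[symmetric] using Lpos \<open>T > 0\<close>
      by (intro arg_cong[where f=cis]) (simp add: field_simps)
  qed
  also have "\<dots> = of_nat (2*N2+1) * cis (- (2*pi * of_int (-j) * T * \<nu> / L))"
    by (rule collapse) (use assms in auto)
  also have "cis (- (2*pi * of_int (-j) * T * \<nu> / L)) = cis (2 * pi * \<nu> * x)"
    unfolding x_def L_def by (intro arg_cong[where f=cis]) (simp add: field_simps)
  finally show ?thesis .
qed

lemma claimA:
  fixes \<Omega> \<tau> x :: real and N1 :: nat and c :: "int \<Rightarrow> complex"
  assumes "\<Omega> > 0"
  shows "(\<Sum>u\<in>{-int N1..int N1}. trig_poly \<Omega> N1 c (x - of_int u / \<Omega>) *
            dirichlet_kernel N1 ((of_int u - \<Omega> * \<tau>) / real (2 * N1 + 1)))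
         = of_nat (2*N1+1) * trig_poly \<Omega> N1 c (x - \<tau>)"
proof -
  define L where "L = real (2*N1+1)"
  have Lpos: "L > 0" unfolding L_def by simp
  define I where "I = {-int N1..int N1}"
  define g where "g k = c k * cis (2 * pi * \<Omega> * of_int k * x / L)" for k
  have "(\<Sum>u\<in>I. trig_poly \<Omega> N1 c (x - of_int u / \<Omega>) *
            dirichlet_kernel N1 ((of_int u - \<Omega> * \<tau>) / real (2 * N1 + 1)))
      = (\<Sum>u\<in>I. \<Sum>m\<in>I. \<Sum>k\<in>I. g k *
            (cis (- (2*pi * of_int m * \<Omega> * \<tau> / L)) * cis (2*pi * of_int (m - k) * of_int u / real(2*N1+1))))"
    unfolding dirichlet_kernel_def trig_poly_def sum_distrib_left sum_distrib_right I_def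
  proof (intro sum.cong refl)
    fix u m k
    show "c k * cis (2 * pi * \<Omega> * of_int k * (x - of_int u / \<Omega>) / real (2 * N1 + 1)) *
           cis (2 * pi * of_int m * ((of_int u - \<Omega> * \<tau>) / real (2 * N1 + 1))) =
          g k * (cis (- (2*pi * of_int m * \<Omega> * \<tau> / L)) * cis (2*pi * of_int (m - k) * of_int u / real(2*N1+1)))"
      unfolding g_def mult.assoc cis_mult L_def[symmetric] using Lpos \<open>\<Omega> > 0\<close>
      by (intro arg_cong[where f="\<lambda>z. c k * cis z"]) (simp add: field_simps)
  qed
  also have "\<dots> = (\<Sum>k\<in>I. g k * (\<Sum>u\<in>I. \<Sum>m\<in>I.
            cis (- (2*pi * of_int m * \<Omega> * \<tau> / L)) * cis (2*pi * of_int (m - k) * of_int u / real(2*N1+1))))"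
  proof -
    have sw: "(\<Sum>u\<in>I. \<Sum>m\<in>I. \<Sum>k\<in>I. F u m k) = (\<Sum>k\<in>I. \<Sum>u\<in>I. \<Sum>m\<in>I. F u m k)"
      for F :: "int \<Rightarrow> int \<Rightarrow> int \<Rightarrow> complex"
    proof -
      have "(\<Sum>u\<in>I. \<Sum>m\<in>I. \<Sum>k\<in>I. F u m k) = (\<Sum>u\<in>I. \<Sum>k\<in>I. \<Sum>m\<in>I. F u m k)"
        by (rule sum.cong[OF refl], rule sum.swap)
      also have "\<dots> = (\<Sum>k\<in>I. \<Sum>u\<in>I. \<Sum>m\<in>I. F u m k)" by (rule sum.swap)
      finally show ?thesis .
    qed
    show ?thesis unfolding sum_distrib_left by (rule sw)
  qed
  also have "\<dots> = (\<Sum>k\<in>I. g k * (of_nat (2*N1+1) * cis (- (2*pi * of_int k * \<Omega> * \<tau> / L))))"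
    unfolding I_def by (intro sum.cong refl arg_cong[where f="\<lambda>z. g _ * z"] collapse) simp
  also have "\<dots> = of_nat (2*N1+1) * trig_poly \<Omega> N1 c (x - \<tau>)"
    unfolding trig_poly_def sum_distrib_left I_def
  proof (intro sum.cong refl)
    fix k
    show "g k * (of_nat (2*N1+1) * cis (- (2*pi * of_int k * \<Omega> * \<tau> / L))) =
          of_nat (2*N1+1) * (c k * cis (2 * pi * \<Omega> * of_int k * (x - \<tau>) / real (2 * N1 + 1)))"
    proof -
      have "cis (2 * pi * \<Omega> * of_int k * (x - \<tau>) / real (2 * N1 + 1)) =
          cis (2 * pi * \<Omega> * of_int k * x / L) * cis (- (2*pi * of_int k * \<Omega> * \<tau> / L))"
        unfolding cis_mult L_def[symmetric] using Lpos
        by (intro arg_cong[where f=cis]) (simp add: field_simps)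
      thus ?thesis unfolding g_def by (simp only: ac_simps)
    qed
  qed
  finally show ?thesis unfolding I_def .
qed

theorem theorem3:
  fixes T \<Omega> \<tau> \<nu> :: real and N1 N2 :: nat and c :: "int \<Rightarrow> complex" and j :: int
  assumes "T > 0" and "\<Omega> > 0"
    and "- int N2 \<le> j" and "j \<le> int N2"
  defines "x \<equiv> T * of_int j / real (2 * N2 + 1)"
  shows "cis (2 * pi * \<nu> * x) * trig_poly \<Omega> N1 c (x - \<tau>) =
    (\<Sum>u\<in>{-int N1..int N1}. \<Sum>v\<in>{-int N2..int N2}.
       cis (2 * pi * x * of_int v / T) * trig_poly \<Omega> N1 c (x - of_int u / \<Omega>) *
       spread_coeff T \<Omega> N1 N2 \<tau> \<nu> u v)"
proof -
  define A where "A = (\<Sum>u\<in>{-int N1..int N1}. trig_poly \<Omega> N1 c (x - of_int u / \<Omega>) *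
            dirichlet_kernel N1 ((of_int u - \<Omega> * \<tau>) / real (2 * N1 + 1)))"
  define B where "B = (\<Sum>v\<in>{-int N2..int N2}. cis (2 * pi * x * of_int v / T) *
            dirichlet_kernel N2 ((of_int v - T * \<nu>) / real (2 * N2 + 1)))"
  have hA: "A = of_nat (2*N1+1) * trig_poly \<Omega> N1 c (x - \<tau>)"
    unfolding A_def by (rule claimA[OF assms(2)])
  have hB: "B = of_nat (2*N2+1) * cis (2 * pi * \<nu> * x)"
    unfolding B_def x_def by (rule claimB[OF assms(1,3,4)])
  have "(\<Sum>u\<in>{-int N1..int N1}. \<Sum>v\<in>{-int N2..int N2}.
       cis (2 * pi * x * of_int v / T) * trig_poly \<Omega> N1 c (x - of_int u / \<Omega>) *
       spread_coeff T \<Omega> N1 N2 \<tau> \<nu> u v) =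
     (1 / (of_nat (2 * N1 + 1) * of_nat (2 * N2 + 1))) * (A * B)"
  proof -
    have AB: "A * B = (\<Sum>u\<in>{-int N1..int N1}. \<Sum>v\<in>{-int N2..int N2}.
        (trig_poly \<Omega> N1 c (x - of_int u / \<Omega>) *
            dirichlet_kernel N1 ((of_int u - \<Omega> * \<tau>) / real (2 * N1 + 1))) *
        (cis (2 * pi * x * of_int v / T) *
            dirichlet_kernel N2 ((of_int v - T * \<nu>) / real (2 * N2 + 1))))"
      unfolding A_def B_def by (rule sum_product)
    show ?thesis unfolding AB sum_distrib_left spread_coeff_def
      by (intro sum.cong refl) (simp only: ac_simps)
  qed
  also have "\<dots> = cis (2 * pi * \<nu> * x) * trig_poly \<Omega> N1 c (x - \<tau>)"
  proof -
    have gen: "a \<noteq> 0 \<Longrightarrow> b \<noteq> 0 \<Longrightarrow> 1/(a*b)*((a*p)*(b*q)) = q*p" for a b p q :: complex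
      by (simp add: field_simps)
    have n1: "(of_nat (2*N1+1)::complex) \<noteq> 0" by (simp only: of_nat_eq_0_iff)
    have n2: "(of_nat (2*N2+1)::complex) \<noteq> 0" by (simp only: of_nat_eq_0_iff)
    show ?thesis unfolding hA hB by (rule gen[OF n1 n2])
  qed
  finally show ?thesis by simp
qed

end
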